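(* Let $\phi_+,\phi_-,\psi_+,\psi_-$ be unit vectors in $\mathbb{C}^2$ such that $0 < |\langle\phi_+,\phi_-\rangle| < 1$. Then there exists a unitary matrix $U$ such that $U\phi_+ = \psi_-$ and $U\phi_-$ is proportional neither to $\psi_+$ nor to $\psi_-$.
   Context: $\langle\cdot,\cdot\rangle$ denotes the standard Hermitian inner product on $\mathbb{C}^2$. *)

theory Defs
  imports "HOL-Analysis.Analysis"
begin

definition hinner :: "complex ^ 'n \<Rightarrow> complex ^ 'n \<Rightarrow> complex" where
  "hinner x y = (\<Sum>i\<in>UNIV. cnj (x $ i) * y $ i)"

definition is_unit_vec :: "complex ^ 'n \<Rightarrow> bool" where
  "is_unit_vec x \<longleftrightarrow> hinner x x = 1"

definition adjoint_mat :: "complex ^ 'n ^ 'm \<Rightarrow> complex ^ 'm ^ 'n" where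
  "adjoint_mat A = (\<chi> i j. cnj (A $ j $ i))"

definition unitary_mat :: "complex ^ 'n ^ 'n \<Rightarrow> bool" where
  "unitary_mat U \<longleftrightarrow> U ** adjoint_mat U = mat 1 \<and> adjoint_mat U ** U = mat 1"

definition proportional :: "complex ^ 'n \<Rightarrow> complex ^ 'n \<Rightarrow> bool" where
  "proportional x y \<longleftrightarrow> (\<exists>c::complex. x = c *s y)"

end

theory Submission
  imports Defs
begin

lemma two_ne: "(1::2) \<noteq> 2" "(2::2) \<noteq> 1" by simp_all

lemma key:
  fixes a b c d p q s :: complex
  assumes ab: "a * cnj a + b * cnj b = 1" and cd: "c * cnj c + d * cnj d = 1"
    and s: "s * s = 1" "cnj s = s"
  defines "U \<equiv> (\<chi> i j. if i = 1 then (if j = 1 then c * cnj a + s * cnj d * b else c * cnj b - s * cnj d * a)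
                       else (if j = 1 then d * cnj a - s * cnj c * b else d * cnj b + s * cnj c * a)) :: complex^2^2"
  shows "unitary_mat U"
    and "(U *v (\<chi> i. if i = 1 then a else b)) = (\<chi> i. if i = 1 then c else d)"
    and "(U *v (\<chi> i. if i = 1 then p else q)) =
       (\<chi> i. if i = 1 then c * (cnj a * p + cnj b * q) - s * cnj d * (a * q - b * p)
                  else d * (cnj a * p + cnj b * q) + s * cnj c * (a * q - b * p))"
proof -
  show "unitary_mat U"
    unfolding unitary_mat_def adjoint_mat_def U_def
    apply (simp add: vec_eq_iff forall_2 matrix_matrix_mult_def sum_2 mat_def two_ne s)
    apply (intro conjI)?
    apply (insert ab cd s(1))
    apply algebra+
    done
  show "(U *v (\<chi> i. if i = 1 then a else b)) = (\<chi> i. if i = 1 then c else d)"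
    unfolding U_def
    apply (simp add: vec_eq_iff forall_2 matrix_vector_mult_def sum_2 two_ne)
    apply (intro conjI)?
    apply (insert ab cd s(1))
    apply algebra+
    done
  show "(U *v (\<chi> i. if i = 1 then p else q)) =
       (\<chi> i. if i = 1 then c * (cnj a * p + cnj b * q) - s * cnj d * (a * q - b * p)
                  else d * (cnj a * p + cnj b * q) + s * cnj c * (a * q - b * p))"
    unfolding U_def
    apply (simp add: vec_eq_iff forall_2 matrix_vector_mult_def sum_2 two_ne)
    apply (intro conjI)?
    apply (simp_all add: algebra_simps)
    done
qed

lemma vec2_eq: "(x::complex^2) = (\<chi> i. if i = 1 then x$1 else x$2)"
  by (simp add: vec_eq_iff forall_2 two_ne)

lemma hinner2: "hinner (x::complex^2) y = cnj (x$1) * y$1 + cnj (x$2) * y$2"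
  by (simp add: hinner_def sum_2)

lemma prop2: "proportional (x::complex^2) y \<Longrightarrow> x$1 * y$2 = x$2 * y$1"
  unfolding proportional_def by auto

theorem lemma11:
  fixes phip phim psip psim :: "complex ^ 2"
  assumes "is_unit_vec phip" and "is_unit_vec phim"
    and "is_unit_vec psip" and "is_unit_vec psim"
    and "0 < cmod (hinner phip phim)" and "cmod (hinner phip phim) < 1"
  shows "\<exists>U :: complex ^ 2 ^ 2. unitary_mat U \<and> U *v phip = psim
           \<and> \<not> proportional (U *v phim) psip \<and> \<not> proportional (U *v phim) psim"
proof -
  define a where "a = phip$1"
  define b where "b = phip$2"
  define c where "c = psim$1"
  define d where "d = psim$2"
  define p where "p = phim$1"
  define q where "q = phim$2"
  define e where "e = psip$1"
  define f where "f = psip$2"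
  define \<alpha> where "\<alpha> = cnj a * p + cnj b * q"
  define \<beta> where "\<beta> = a * q - b * p"
  have ab: "a * cnj a + b * cnj b = 1" using assms(1)
    unfolding is_unit_vec_def hinner2 a_def b_def by (simp add: mult.commute)
  have pq: "p * cnj p + q * cnj q = 1" using assms(2)
    unfolding is_unit_vec_def hinner2 p_def q_def by (simp add: mult.commute)
  have cd: "c * cnj c + d * cnj d = 1" using assms(4)
    unfolding is_unit_vec_def hinner2 c_def d_def by (simp add: mult.commute)
  have ha: "hinner phip phim = \<alpha>" unfolding hinner2 \<alpha>_def a_def b_def p_def q_def by simp
  have a0: "\<alpha> \<noteq> 0" using assms(5) ha by auto
  have nid: "\<alpha> * cnj \<alpha> + \<beta> * cnj \<beta> = (a * cnj a + b * cnj b) * (p * cnj p + q * cnj q)"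
    unfolding \<alpha>_def \<beta>_def by (simp add: algebra_simps)
  have b0: "\<beta> \<noteq> 0"
  proof
    assume "\<beta> = 0"
    then have "\<alpha> * cnj \<alpha> = 1" using nid ab pq by simp
    then have "complex_of_real ((cmod \<alpha>)^2) = 1" by (simp add: complex_norm_square [symmetric])
    then have "(cmod \<alpha>)^2 = 1" by (metis of_real_1 of_real_eq_iff)
    then have "cmod \<alpha> = 1" using norm_ge_zero[of \<alpha>] by (auto simp add: power2_eq_1_iff)
    then show False using assms(6) ha by simp
  qed
  have phip_eq: "phip = (\<chi> i. if i = 1 then a else b)" unfolding a_def b_def by (rule vec2_eq)
  have psim_eq: "psim = (\<chi> i. if i = 1 then c else d)" unfolding c_def d_def by (rule vec2_eq)
  have phim_eq: "phim = (\<chi> i. if i = 1 then p else q)" unfolding p_def q_def by (rule vec2_eq)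
  have gen: "\<exists>U :: complex^2^2. unitary_mat U \<and> U *v phip = psim \<and>
     U *v phim = (\<chi> i. if i = 1 then c * \<alpha> - s * cnj d * \<beta> else d * \<alpha> + s * cnj c * \<beta>)"
    if s: "s * s = 1" "cnj s = s" for s
    unfolding phip_eq psim_eq phim_eq \<alpha>_def \<beta>_def
    apply (rule exI)
    apply (rule conjI, rule key(1)[OF ab cd s])
    apply (rule conjI, rule key(2)[OF ab cd s])
    apply (rule key(3)[OF ab cd s])
    done
  have notpm: "\<not> proportional (\<chi> i. if i = 1 then c * \<alpha> - s * cnj d * \<beta> else d * \<alpha> + s * cnj c * \<beta>) psim"
    if s: "s * s = 1" for s
  proof
    assume "proportional (\<chi> i. if i = 1 then c * \<alpha> - s * cnj d * \<beta> else d * \<alpha> + s * cnj c * \<beta>) psim"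
    from prop2[OF this] have "(c * \<alpha> - s * cnj d * \<beta>) * d = (d * \<alpha> + s * cnj c * \<beta>) * c"
      by (simp add: two_ne c_def d_def)
    then have "s * \<beta> * (c * cnj c + d * cnj d) = 0" by (simp add: algebra_simps)
    then have "s * \<beta> = 0" using cd by simp
    then show False using b0 s by auto
  qed
  show ?thesis
  proof (cases "proportional (\<chi> i. if i = 1 then c * \<alpha> - 1 * cnj d * \<beta> else d * \<alpha> + 1 * cnj c * \<beta>) psip")
    case False
    obtain U :: "complex^2^2" where U: "unitary_mat U" "U *v phip = psim"
      "U *v phim = (\<chi> i. if i = 1 then c * \<alpha> - 1 * cnj d * \<beta> else d * \<alpha> + 1 * cnj c * \<beta>)"
      using gen[of 1] by auto
    have np: "\<not> proportional (U *v phim) psim" using notpm[of 1] U(3) by simp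
    show ?thesis using U(1,2) np False U(3) by (intro exI[of _ U]) simp
  next
    case True
    have "\<not> proportional (\<chi> i. if i = 1 then c * \<alpha> - (-1) * cnj d * \<beta> else d * \<alpha> + (-1) * cnj c * \<beta>) psip"
    proof
      assume "proportional (\<chi> i. if i = 1 then c * \<alpha> - (-1) * cnj d * \<beta> else d * \<alpha> + (-1) * cnj c * \<beta>) psip"
      then obtain k2 where k2: "(\<chi> i. if i = 1 then c * \<alpha> - (-1) * cnj d * \<beta> else d * \<alpha> + (-1) * cnj c * \<beta>) = k2 *s psip"
        unfolding proportional_def by auto
      from True obtain k1 where k1: "(\<chi> i. if i = 1 then c * \<alpha> - 1 * cnj d * \<beta> else d * \<alpha> + 1 * cnj c * \<beta>) = k1 *s psip"
        unfolding proportional_def by auto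
      have e1: "c * \<alpha> + cnj d * \<beta> = k2 * e" "d * \<alpha> - cnj c * \<beta> = k2 * f"
        using arg_cong[OF k2, of "\<lambda>v. v$1"] arg_cong[OF k2, of "\<lambda>v. v$2"]
        by (simp_all add: two_ne e_def f_def)
      have e2: "c * \<alpha> - cnj d * \<beta> = k1 * e" "d * \<alpha> + cnj c * \<beta> = k1 * f"
        using arg_cong[OF k1, of "\<lambda>v. v$1"] arg_cong[OF k1, of "\<lambda>v. v$2"]
        by (simp_all add: two_ne e_def f_def)
      have "(c * \<alpha> - cnj d * \<beta>) * (d * \<alpha> - cnj c * \<beta>) - (d * \<alpha> + cnj c * \<beta>) * (c * \<alpha> + cnj d * \<beta>) = 0"
        unfolding e1 e2 by (simp add: algebra_simps)
      then have "2 * \<alpha> * \<beta> * (c * cnj c + d * cnj d) = 0" by algebra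
      then show False using cd a0 b0 by simp
    qed
    moreover obtain U :: "complex^2^2" where U: "unitary_mat U" "U *v phip = psim"
      "U *v phim = (\<chi> i. if i = 1 then c * \<alpha> - (-1) * cnj d * \<beta> else d * \<alpha> + (-1) * cnj c * \<beta>)"
      using gen[of "-1"] by auto
    moreover have np: "\<not> proportional (U *v phim) psim" using notpm[of "-1"] U(3) by simp
    ultimately show ?thesis using U(1,2) U(3) by (intro exI[of _ U]) simp
  qed
qed

end
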